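(* Let $M\in\mathbb{N}$ and $t\ge 0$. Let $\gamma_1,\dots,\gamma_M\in\mathbb{C}$ with $\mathrm{Re}(\gamma_j)>0$, let $\nu\in\mathbb{C}\setminus\{0\}$ with $\mathrm{Re}(\nu)>0$, let $\delta_1,\dots,\delta_M\in\mathbb{C}\setminus\{0\}$ with $\mathrm{Re}(\delta_j)>0$, and let $\eta_1,\dots,\eta_M\in\mathbb{C}$ be pairwise distinct. Then $$\Bigl(x^{\delta_1-1}E^{\gamma_1}_{\nu,\delta_1}(\eta_1x^\nu)\ast\cdots\ast x^{\delta_M-1}E^{\gamma_M}_{\nu,\delta_M}(\eta_Mx^\nu)\Bigr)(t)=t^{\sum_{j=1}^M\delta_j-1}\,E^{(\gamma_1,\dots,\gamma_M)}_{\nu,\sum_{j=1}^M\delta_j}\bigl(\eta_1t^\nu,\dots,\eta_Mt^\nu\bigr),$$ where the convolution is performed with respect to the variable $x\ge 0$.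
   Context: For $\nu,\gamma,\delta\in\mathbb{C}$ with positive real parts, the generalized (three-parameter, Prabhakar) Mittag-Leffler function is $E^{\gamma}_{\nu,\delta}(x)=\sum_{k=0}^\infty\frac{\Gamma(\gamma+k)}{\Gamma(\gamma)\,k!}\frac{x^k}{\Gamma(\nu k+\delta)}$. For $\gamma=(\gamma_1,\dots,\gamma_M)\in\mathbb{C}^M$ with $\mathrm{Re}(\gamma_j)>0$, $\nu,\delta\in\mathbb{C}$ with $\mathrm{Re}(\nu)>0$, and $x=(x_1,\dots,x_M)\in\mathbb{C}^M$, the multivariate generalized Mittag-Leffler function is $$E^{\gamma}_{\nu,\delta}(x)=\sum_{k_1,\dots,k_M=0}^\infty\prod_{j=1}^M\frac{\Gamma(\gamma_j+k_j)}{\Gamma(\gamma_j)\,k_j!}x_j^{k_j}\;\frac{1}{\Gamma\bigl(\nu\sum_{j=1}^Mk_j+\delta\bigr)}.$$ The convolution of functions on $[0,\infty)$ is $(f\ast g)(t)=\int_0^t f(t-x)g(x)\,dx$. *)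

theory Defs
  imports "HOL-Analysis.Analysis"
begin

definition ML3 :: "complex \<Rightarrow> complex \<Rightarrow> complex \<Rightarrow> complex \<Rightarrow> complex" where
  "ML3 \<gamma> \<nu> \<delta> x =
     (\<Sum>k. Gamma (\<gamma> + of_nat k) / (Gamma \<gamma> * fact k) * x ^ k / Gamma (\<nu> * of_nat k + \<delta>))"

text \<open>Multivariate generalized Mittag-Leffler function with M variables; the
  vectors gamma and x are indexed by 0..M-1, multi-indices are the
  functions in the extensional function space from {..<M} to the naturals.\<close>
definition MML :: "nat \<Rightarrow> (nat \<Rightarrow> complex) \<Rightarrow> complex \<Rightarrow> complex \<Rightarrow> (nat \<Rightarrow> complex) \<Rightarrow> complex" where
  "MML M \<gamma> \<nu> \<delta> x =
     infsum (\<lambda>k. (\<Prod>j<M. Gamma (\<gamma> j + of_nat (k j)) / (Gamma (\<gamma> j) * fact (k j)) * x j ^ k j)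
                  / Gamma (\<nu> * of_nat (\<Sum>j<M. k j) + \<delta>))
            ({..<M} \<rightarrow>\<^sub>E (UNIV :: nat set))"

definition conv :: "(real \<Rightarrow> complex) \<Rightarrow> (real \<Rightarrow> complex) \<Rightarrow> real \<Rightarrow> complex" where
  "conv f g t = integral {0..t} (\<lambda>x. f (t - x) * g x)"

fun conv_iter :: "(nat \<Rightarrow> real \<Rightarrow> complex) \<Rightarrow> nat \<Rightarrow> real \<Rightarrow> complex" where
  "conv_iter f 0 = f 0"
| "conv_iter f (Suc n) = conv (conv_iter f n) (f (Suc n))"

end

theory Submission
  imports Defs "HOL-Analysis.Analysis" "HOL-Real_Asymp.Real_Asymp"
begin

lemma scale_has_integral:
  fixes k :: "real \<Rightarrow> 'b::real_normed_vector"
  assumes "(k has_integral J) {0..1}" "t > 0"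
  shows "((\<lambda>x. k (x / t)) has_integral (t *\<^sub>R J)) {0..t}"
proof -
  have "(k has_integral J) (cbox 0 1)" using assms by simp
  from has_integral_affinity'[OF this, of "1/t" 0] assms(2)
  show ?thesis by (simp add: field_simps)
qed

lemma real_beta_scaled:
  fixes a b t :: real
  assumes "a > 0" "b > 0" "t > 0"
  shows "((\<lambda>x. (t - x) powr (a - 1) * x powr (b - 1)) has_integral (t powr (a + b - 1) * Beta a b)) {0..t}"
proof -
  have "((\<lambda>u. u powr (b - 1) * (1 - u) powr (a - 1)) has_integral Beta b a) {0..1}"
    using has_integral_Beta_real[of b a] assms by simp
  from scale_has_integral[OF this assms(3)]
  have "((\<lambda>x. (x / t) powr (b - 1) * (1 - x / t) powr (a - 1)) has_integral t * Beta a b) {0..t}"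
    by (simp add: Beta_commute)
  from has_integral_mult_right[OF this, of "t powr (a + b - 2)"]
  have *: "((\<lambda>x. t powr (a + b - 2) * ((x / t) powr (b - 1) * (1 - x / t) powr (a - 1))) has_integral t powr (a + b - 2) * (t * Beta a b)) {0..t}" .
  have e: "t powr (a + b - 2) * (t * Beta a b) = t powr (a + b - 1) * Beta a b"
    using assms by (simp add: powr_add [symmetric] powr_diff field_simps power2_eq_square)
  show ?thesis
  proof (rule has_integral_spike[OF negligible_finite[of "{0, t}"] _ *[unfolded e]])
    fix x assume x: "x \<in> {0..t} - {0, t}"
    then have x0: "0 < x" "x < t" by auto
    have "1 - x / t = (t - x) / t" using assms by (simp add: field_simps)
    then have "t powr (a + b - 2) * ((x / t) powr (b - 1) * (1 - x / t) powr (a - 1))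
       = (t powr (a - 1) * t powr (b - 1)) * (x powr (b - 1) / t powr (b - 1) * ((t - x) powr (a - 1) / t powr (a - 1)))"
      using x0 assms by (simp add: powr_divide powr_add [symmetric])
    also have "\<dots> = (t - x) powr (a - 1) * x powr (b - 1)" using assms by simp
    finally show "(t - x) powr (a - 1) * x powr (b - 1) = t powr (a + b - 2) * ((x / t) powr (b - 1) * (1 - x / t) powr (a - 1))"
      by simp
  qed auto
qed

lemma norm_ofreal_powr: "x \<ge> 0 \<Longrightarrow> norm (complex_of_real x powr z) = x powr Re z"
  by (simp add: norm_powr_real_powr)

lemma beta_absint_open:
  fixes a b :: complex and t :: real
  assumes "Re a > 0" "Re b > 0" "t > 0"
  shows "(\<lambda>x. complex_of_real (t - x) powr (a - 1) * complex_of_real x powr (b - 1)) absolutely_integrable_on {0<..<t}"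
  unfolding set_integrable_def
proof (rule Bochner_Integration.integrable_bound [OF _ _ AE_I2])
  have "((\<lambda>x. (t - x) powr (Re a - 1) * x powr (Re b - 1)) has_integral (t powr (Re a + Re b - 1) * Beta (Re a) (Re b))) {0..t}"
    using real_beta_scaled[of "Re a" "Re b" t] assms by simp
  then have "(\<lambda>x. (t - x) powr (Re a - 1) * x powr (Re b - 1)) integrable_on {0<..<t}"
    using integrable_on_Icc_iff_Ioo by blast
  then have "(\<lambda>x. (t - x) powr (Re a - 1) * x powr (Re b - 1)) absolutely_integrable_on {0<..<t}"
    by (rule nonnegative_absolutely_integrable_1) auto
  then show "integrable lebesgue (\<lambda>x. indicat_real {0<..<t} x *\<^sub>R ((t - x) powr (Re a - 1) * x powr (Re b - 1)))"
    by (simp add: set_integrable_def)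
  show "(\<lambda>x. indicat_real {0<..<t} x *\<^sub>R (complex_of_real (t - x) powr (a - 1) * complex_of_real x powr (b - 1))) \<in> borel_measurable lebesgue"
    by (intro measurable_completion)
       (auto intro!: borel_measurable_continuous_on_indicator continuous_intros)
  fix x :: real
  show "norm (indicat_real {0<..<t} x *\<^sub>R (complex_of_real (t - x) powr (a - 1) * complex_of_real x powr (b - 1)))
        \<le> norm (indicat_real {0<..<t} x *\<^sub>R ((t - x) powr (Re a - 1) * x powr (Re b - 1)))"
    by (auto simp: indicator_def norm_mult norm_ofreal_powr simp del: of_real_diff)
qed

lemma beta_absint:
  fixes a b :: complex and t :: real
  assumes "Re a > 0" "Re b > 0" "t > 0"
  shows "(\<lambda>x. complex_of_real (t - x) powr (a - 1) * complex_of_real x powr (b - 1)) absolutely_integrable_on {0..t}"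
  using beta_absint_open[OF assms] absolutely_integrable_on_open_interval by (metis box_real(1) cbox_interval)

definition gf :: "complex \<Rightarrow> real \<Rightarrow> complex" where
  "gf z t = indicator {0<..} t *\<^sub>R (complex_of_real t powr (z - 1) / complex_of_real (exp t))"

lemma gf_measurable [measurable]: "gf z \<in> borel_measurable borel"
  unfolding gf_def
  by (auto intro!: borel_measurable_continuous_on_indicator continuous_intros)

lemma gf_integrable: assumes "Re z > 0" shows "integrable lborel (gf z)"
proof -
  have "set_integrable lebesgue {0<..} (\<lambda>t. complex_of_real t powr (z - 1) / complex_of_real (exp t))"
    using absolutely_integrable_Gamma_integral'[OF assms] .
  then have "integrable lebesgue (gf z)" by (simp add: set_integrable_def gf_def[abs_def])
  then show ?thesis by (subst (asm) integrable_completion) auto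
qed

lemma gf_integral: assumes "Re z > 0" shows "(\<integral>t. gf z t \<partial>lborel) = Gamma z"
proof -
  have "set_integrable lborel {0<..} (\<lambda>t. complex_of_real t powr (z - 1) / complex_of_real (exp t))"
    using gf_integrable[OF assms] by (simp add: set_integrable_def gf_def[abs_def])
  from set_borel_integral_eq_integral(2)[OF this]
  have "(\<integral>t. gf z t \<partial>lborel) = integral {0<..} (\<lambda>t. complex_of_real t powr (z - 1) / complex_of_real (exp t))"
    by (simp add: set_lebesgue_integral_def gf_def)
  also have "\<dots> = Gamma z" using Gamma_integral_complex'[OF assms] by (rule integral_unique)
  finally show ?thesis .
qed

lemma Re_pos_not_nonpos_Int: "Re z > 0 \<Longrightarrow> z \<notin> \<int>\<^sub>\<le>\<^sub>0"
  by (force elim!: nonpos_Ints_cases)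

lemma cpowr_of_real_mult:
  "x \<ge> 0 \<Longrightarrow> y \<ge> 0 \<Longrightarrow> complex_of_real (x * y) powr z = complex_of_real x powr z * complex_of_real y powr z"
  by (simp add: powr_times_real)

lemma cpowr_of_real_divide:
  assumes "x \<ge> 0" "y > 0"
  shows "complex_of_real (x / y) powr z = complex_of_real x powr z / complex_of_real y powr z"
proof -
  have "complex_of_real x powr z = complex_of_real ((x / y) * y) powr z" using assms by simp
  also have "\<dots> = complex_of_real (x / y) powr z * complex_of_real y powr z"
    using assms by (intro cpowr_of_real_mult) auto
  finally show ?thesis using assms by simp
qed

lemma complex_beta_scaled_J:
  fixes a b J :: complex and t :: real
  assumes "Re a > 0" "Re b > 0" "t > 0"
    and J: "((\<lambda>x. complex_of_real (1 - x) powr (a - 1) * complex_of_real x powr (b - 1)) has_integral J) {0..1}"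
  shows "((\<lambda>x. complex_of_real (t - x) powr (a - 1) * complex_of_real x powr (b - 1))
           has_integral (complex_of_real t powr (a + b - 1) * J)) {0..t}"
proof -
  define c where "c = complex_of_real t powr (a + b - 2)"
  from has_integral_mult_right[OF scale_has_integral[OF J assms(3)], of c]
  have *: "((\<lambda>x. c * (complex_of_real (1 - x / t) powr (a - 1) * complex_of_real (x / t) powr (b - 1)))
          has_integral c * (t *\<^sub>R J)) {0..t}" .
  have tnz: "complex_of_real t powr w \<noteq> 0" for w using assms by simp
  have e: "c * (t *\<^sub>R J) = complex_of_real t powr (a + b - 1) * J"
  proof -
    have "complex_of_real t powr (a + b - 1) = complex_of_real t powr ((a + b - 2) + 1)" by simp
    also have "\<dots> = c * complex_of_real t" unfolding c_def by (subst powr_add) simp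
    finally show ?thesis by (simp add: scaleR_conv_of_real mult_ac)
  qed
  show ?thesis
  proof (rule has_integral_spike[OF negligible_finite[of "{0, t}"] _ *[unfolded e]])
    fix x assume x: "x \<in> {0..t} - {0, t}"
    then have x0: "0 < x" "x < t" by auto
    have "1 - x / t = (t - x) / t" using assms by (simp add: field_simps)
    then have "c * (complex_of_real (1 - x / t) powr (a - 1) * complex_of_real (x / t) powr (b - 1))
       = (complex_of_real t powr (a - 1) * complex_of_real t powr (b - 1)) *
         (complex_of_real (t - x) powr (a - 1) / complex_of_real t powr (a - 1) *
          (complex_of_real x powr (b - 1) / complex_of_real t powr (b - 1)))"
      using x0 assms unfolding c_def
      by (simp add: cpowr_of_real_divide powr_add [symmetric] del: of_real_diff of_real_divide)
    also have "\<dots> = complex_of_real (t - x) powr (a - 1) * complex_of_real x powr (b - 1)"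
      using tnz by (simp add: field_simps)
    finally show "complex_of_real (t - x) powr (a - 1) * complex_of_real x powr (b - 1) =
       c * (complex_of_real (1 - x / t) powr (a - 1) * complex_of_real (x / t) powr (b - 1))"
      by simp
  qed auto
qed

lemma complex_beta_core:
  fixes a b :: complex
  assumes a: "Re a > 0" and b: "Re b > 0"
  shows "((\<lambda>x. complex_of_real (1 - x) powr (a - 1) * complex_of_real x powr (b - 1)) has_integral Beta a b) {0..1}"
proof -
  define k where "k = (\<lambda>x. complex_of_real (1 - x) powr (a - 1) * complex_of_real x powr (b - 1))"
  have "k integrable_on {0..1}"
    using set_lebesgue_integral_eq_integral(1)[OF beta_absint[OF a b, of 1]] by (simp add: k_def)
  then have kJ: "(k has_integral integral {0..1} k) {0..1}" by (rule integrable_integral)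
  define J where "J = integral {0..1} k"
  have Ku: "((\<lambda>x. complex_of_real (u - x) powr (a - 1) * complex_of_real x powr (b - 1))
           has_integral (complex_of_real u powr (a + b - 1) * J)) {0..u}" if "u > 0" for u
    using complex_beta_scaled_J[OF a b that, of J] kJ by (simp add: k_def J_def)
  define H where "H = (\<lambda>t u. gf b t * gf a (u - t))"
  have ia: "integrable lborel (gf a)" and ib: "integrable lborel (gf b)"
    using gf_integrable a b by auto
  have shift: "integrable lborel (\<lambda>u. gf a (u - t))" for t
  proof -
    have "integrable lborel (\<lambda>u. gf a (- t + 1 * u))"
      using lborel_integrable_real_affine_iff[of 1 "gf a" "- t"] ia by simp
    then show ?thesis by simp
  qed
  have shift_int: "(\<integral>u. gf a (u - t) \<partial>lborel) = Gamma a" for t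
  proof -
    have "(\<integral>u. gf a (u - t) \<partial>lborel) = \<bar>1\<bar> *\<^sub>R (\<integral>u. gf a (t + 1 * u - t) \<partial>lborel)"
      by (rule lborel_integral_real_affine) simp
    then show ?thesis using gf_integral[OF a] by simp
  qed
  have step1: "(\<integral>t. (\<integral>u. H t u \<partial>lborel) \<partial>lborel) = Gamma b * Gamma a"
    unfolding H_def by (simp add: shift_int gf_integral[OF b])
  have Hmeas: "case_prod H \<in> borel_measurable (lborel \<Otimes>\<^sub>M lborel)"
    unfolding H_def by measurable
  have Hint: "integrable (lborel \<Otimes>\<^sub>M lborel) (case_prod H)"
  proof -
    have nt: "(\<integral>u. norm (H t u) \<partial>lborel) = norm (gf b t) * (\<integral>u. norm (gf a u) \<partial>lborel)" for t
    proof -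
      have "(\<integral>u. norm (gf a (u - t)) \<partial>lborel) = \<bar>1\<bar> *\<^sub>R (\<integral>u. norm (gf a (t + 1 * u - t)) \<partial>lborel)"
        by (rule lborel_integral_real_affine) simp
      then show ?thesis by (simp add: H_def norm_mult)
    qed
    have i1: "integrable lborel (\<lambda>t. \<integral>u. norm (H t u) \<partial>lborel)"
      unfolding nt using ib by (simp add: integrable_norm)
    have i2: "AE t in lborel. integrable lborel (\<lambda>u. H t u)"
      unfolding H_def using shift by (intro AE_I2 integrable_mult_right) auto
    show ?thesis
      by (rule lborel_pair.Fubini_integrable[OF Hmeas]) (use i1 i2 in simp_all)
  qed
  have step2: "(\<integral>u. (\<integral>t. H t u \<partial>lborel) \<partial>lborel) = (\<integral>t. (\<integral>u. H t u \<partial>lborel) \<partial>lborel)"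
    using lborel_pair.Fubini_integral[OF Hint] .
  have step3: "(\<integral>t. H t u \<partial>lborel) = gf (a + b) u * J" for u
  proof (cases "u > 0")
    case False
    then have "H t u = 0" for t unfolding H_def gf_def by (auto simp: indicator_def)
    moreover have "gf (a + b) u = 0" using False unfolding gf_def by (auto simp: indicator_def)
    ultimately show ?thesis by simp
  next
    case True
    define K where "K = (\<lambda>x. complex_of_real (u - x) powr (a - 1) * complex_of_real x powr (b - 1))"
    have HK: "H t u = indicator {0<..<u} t *\<^sub>R K t / complex_of_real (exp u)" for t
    proof (cases "0 < t \<and> t < u")
      case True
      then show ?thesis unfolding H_def gf_def K_def
        by (simp add: indicator_def exp_diff field_simps del: of_real_diff)
    next
      case False
      then show ?thesis unfolding H_def gf_def K_def by (auto simp: indicator_def)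
    qed
    have "set_integrable lebesgue {0<..<u} K"
      using beta_absint_open[OF a b True] by (simp add: K_def)
    then have Ki: "set_integrable lborel {0<..<u} K"
      unfolding set_integrable_def K_def
      by (subst (asm) integrable_completion)
         (auto intro!: borel_measurable_continuous_on_indicator continuous_intros)
    have "(\<integral>t. H t u \<partial>lborel) = (LINT t:{0<..<u}|lborel. K t) / complex_of_real (exp u)"
      by (simp add: HK set_lebesgue_integral_def)
    also have "(LINT t:{0<..<u}|lborel. K t) = integral {0<..<u} K"
      by (rule set_borel_integral_eq_integral(2)[OF Ki])
    also have "\<dots> = integral {0..u} K" by (simp add: integral_open_interval_real)
    also have "\<dots> = complex_of_real u powr (a + b - 1) * J"
      using Ku[OF True] by (simp add: K_def integral_unique)
    finally show ?thesis using True by (simp add: gf_def indicator_def)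
  qed
  have ab: "Re (a + b) > 0" using a b by simp
  have "Gamma b * Gamma a = Gamma (a + b) * J"
    using step1 step2 step3 gf_integral[OF ab] by simp
  then have "J = Beta a b"
    using Gamma_nonzero[OF Re_pos_not_nonpos_Int[OF ab]] by (simp add: Beta_def field_simps)
  then show ?thesis using kJ by (simp add: k_def J_def)
qed

lemma complex_beta_scaled:
  fixes a b :: complex and t :: real
  assumes "Re a > 0" "Re b > 0" "t > 0"
  shows "((\<lambda>x. complex_of_real (t - x) powr (a - 1) * complex_of_real x powr (b - 1))
           has_integral (complex_of_real t powr (a + b - 1) * Beta a b)) {0..t}"
  by (rule complex_beta_scaled_J[OF assms complex_beta_core[OF assms(1,2)]])

lemma Beta_nat_eq:
  fixes c :: real
  assumes "c > 0"
  shows "Beta (1 + real N) c = fact N / pochhammer c (Suc N)"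
proof -
  have "rGamma c = pochhammer c (Suc N) * rGamma (c + of_nat (Suc N))" by (rule pochhammer_rGamma)
  then have "Gamma (c + of_nat (Suc N)) = pochhammer c (Suc N) * Gamma c"
    using assms by (auto simp: Gamma_def field_simps rGamma_eq_zero_iff elim!: nonpos_Ints_cases)
  moreover have "Gamma (1 + real N) = fact N" using Gamma_fact[of N] by simp
  moreover have "Gamma c \<noteq> 0" using assms by (simp add: Gamma_eq_zero_iff) (auto elim!: nonpos_Ints_cases)
  ultimately show ?thesis by (simp add: Beta_def add_ac)
qed

lemma Beta_nat_tendsto:
  fixes c :: real
  assumes "c > 0"
  shows "(\<lambda>N. Beta (1 + real N) c) \<longlonglongrightarrow> 0"
proof -
  have ev: "eventually (\<lambda>N. Beta (1 + real N) c = Gamma_series c N / exp (c * ln (real N))) sequentially"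
    using eventually_gt_at_top[of "0::nat"]
    by eventually_elim (simp add: Beta_nat_eq[OF assms] Gamma_series_def)
  have "filterlim (\<lambda>N::nat. exp (c * ln (real N))) at_top sequentially"
    using assms by real_asymp
  then have "(\<lambda>N. Gamma_series c N / exp (c * ln (real N))) \<longlonglongrightarrow> 0"
    by (intro tendsto_divide_0[OF Gamma_series_LIMSEQ] filterlim_at_top_imp_at_infinity)
  then show ?thesis using tendsto_cong[OF ev] by simp
qed

lemma Beta_large:
  fixes c e :: real
  assumes "c > 0" "e > 0"
  shows "\<exists>X0>0. \<forall>X\<ge>X0. Beta X c < e"
proof -
  from order_tendstoD(2)[OF Beta_nat_tendsto[OF assms(1)] assms(2)]
  obtain N where "Beta (1 + real N) c < e"
    by (auto simp: eventually_sequentially)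
  moreover have "Beta X c \<le> Beta (1 + real N) c" if "X \<ge> 1 + real N" for X
    using that assms by (intro Beta_real_mono) auto
  ultimately show ?thesis by (intro exI[of _ "1 + real N"]) force
qed

lemma norm_Beta_le:
  fixes a b :: complex
  assumes "Re a > 0" "Re b > 0"
  shows "norm (Beta a b) \<le> Beta (Re a) (Re b)"
proof -
  have c: "((\<lambda>x. complex_of_real (1 - x) powr (a - 1) * complex_of_real x powr (b - 1)) has_integral Beta a b) {0..1}"
    by (rule complex_beta_core[OF assms])
  have r: "((\<lambda>x. (1 - x) powr (Re a - 1) * x powr (Re b - 1)) has_integral Beta (Re a) (Re b)) {0..1}"
    using real_beta_scaled[of "Re a" "Re b" 1] assms by simp
  have "norm (integral {0..1} (\<lambda>x. complex_of_real (1 - x) powr (a - 1) * complex_of_real x powr (b - 1)))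
        \<le> integral {0..1} (\<lambda>x. (1 - x) powr (Re a - 1) * x powr (Re b - 1))"
    using c r
    by (intro integral_norm_bound_integral)
       (auto simp: has_integral_integrable norm_mult norm_ofreal_powr simp del: of_real_diff)
  then show ?thesis using integral_unique[OF c] integral_unique[OF r] by simp
qed

lemma Gamma_ratio_Beta:
  fixes w v :: complex
  assumes "Re w > 0" "Re v > 0"
  shows "Gamma w / Gamma (w + v) = Beta w v / Gamma v"
proof -
  have "Gamma v \<noteq> 0" "Gamma (w + v) \<noteq> 0"
    using assms by (auto intro!: Gamma_nonzero Re_pos_not_nonpos_Int)
  then show ?thesis by (simp add: Beta_def field_simps)
qed

definition MLterm :: "complex \<Rightarrow> complex \<Rightarrow> complex \<Rightarrow> complex \<Rightarrow> nat \<Rightarrow> complex" where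
  "MLterm \<gamma> \<nu> \<delta> z m = Gamma (\<gamma> + of_nat m) / (Gamma \<gamma> * fact m) * z ^ m / Gamma (\<nu> * of_nat m + \<delta>)"

lemma MLterm_Suc:
  fixes \<gamma> \<nu> \<delta> z :: complex
  assumes "Re \<nu> > 0" "Re \<delta> > 0" and g: "Re \<gamma> > 0"
  shows "MLterm \<gamma> \<nu> \<delta> z (Suc m) = MLterm \<gamma> \<nu> \<delta> z m * ((\<gamma> + of_nat m) * z / of_nat (Suc m))
           * (Beta (\<nu> * of_nat m + \<delta>) \<nu> / Gamma \<nu>)"
proof -
  define w where "w = \<nu> * of_nat m + \<delta>"
  have w: "Re w > 0" using assms by (simp add: w_def add_nonneg_pos)
  have g1: "Gamma (\<gamma> + of_nat (Suc m)) = (\<gamma> + of_nat m) * Gamma (\<gamma> + of_nat m)"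
    using Gamma_plus1[of "\<gamma> + of_nat m"] g Re_pos_not_nonpos_Int[of "\<gamma> + of_nat m"]
    by (simp add: add_ac add_pos_nonneg)
  have g2: "\<nu> * of_nat (Suc m) + \<delta> = w + \<nu>" by (simp add: w_def algebra_simps)
  have gw: "Gamma w \<noteq> 0" using w by (auto intro!: Gamma_nonzero Re_pos_not_nonpos_Int)
  have "1 / Gamma (w + \<nu>) = (1 / Gamma w) * (Gamma w / Gamma (w + \<nu>))" using gw by simp
  also have "\<dots> = (1 / Gamma w) * (Beta w \<nu> / Gamma \<nu>)" using Gamma_ratio_Beta[OF w assms(1)] by simp
  finally have rr: "1 / Gamma (w + \<nu>) = (1 / Gamma w) * (Beta w \<nu> / Gamma \<nu>)" .
  define P where "P = Gamma (\<gamma> + of_nat m) / (Gamma \<gamma> * fact m) * z ^ m"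
  have e1: "MLterm \<gamma> \<nu> \<delta> z (Suc m) = P * ((\<gamma> + of_nat m) * z / of_nat (Suc m)) * (1 / Gamma (w + \<nu>))"
    unfolding MLterm_def g1 g2 P_def by (simp add: field_simps)
  have e2: "MLterm \<gamma> \<nu> \<delta> z m = P * (1 / Gamma w)"
    unfolding MLterm_def w_def P_def by simp
  show ?thesis unfolding e1 e2 rr by (simp add: w_def mult_ac)
qed

lemma MLterm_abs_summable:
  fixes \<gamma> \<nu> \<delta> z :: complex
  assumes "Re \<nu> > 0" "Re \<delta> > 0" "Re \<gamma> > 0"
  shows "summable (\<lambda>m. norm (MLterm \<gamma> \<nu> \<delta> z m))"
proof -
  define K where "K = (norm \<gamma> + 1) * norm z / norm (Gamma \<nu>)"
  have K0: "K \<ge> 0" by (simp add: K_def)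
  obtain X0 where X0: "X0 > 0" "\<And>X. X \<ge> X0 \<Longrightarrow> Beta X (Re \<nu>) < 1 / (2 * (K + 1))"
    using Beta_large[of "Re \<nu>" "1 / (2 * (K + 1))"] assms K0 by auto
  obtain N :: nat where N: "real N \<ge> X0 / Re \<nu>" using real_arch_simple by blast
  show ?thesis
  proof (rule summable_ratio_test[of "1/2" N])
    fix m assume m: "m \<ge> N"
    define w where "w = \<nu> * of_nat m + \<delta>"
    have w: "Re w > 0" using assms by (simp add: w_def add_nonneg_pos)
    have "Re w \<ge> X0"
    proof -
      have "X0 \<le> Re \<nu> * real N" using N assms by (simp add: field_simps)
      also have "\<dots> \<le> Re \<nu> * real m" using m assms by (intro mult_left_mono) auto
      finally show ?thesis using assms by (simp add: w_def)
    qed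
    then have B: "Beta (Re w) (Re \<nu>) < 1 / (2 * (K + 1))" by (rule X0(2))
    have nB: "norm (Beta w \<nu>) \<le> Beta (Re w) (Re \<nu>)" by (rule norm_Beta_le[OF w assms(1)])
    have q: "norm ((\<gamma> + of_nat m) * z / of_nat (Suc m)) \<le> (norm \<gamma> + 1) * norm z"
    proof -
      have "norm (\<gamma> + of_nat m) \<le> norm \<gamma> + real m" using norm_triangle_ineq[of \<gamma> "of_nat m"] by simp
      also have "\<dots> \<le> (norm \<gamma> + 1) * real (Suc m)" by (simp add: algebra_simps)
      finally have "norm (\<gamma> + of_nat m) / real (Suc m) \<le> norm \<gamma> + 1"
        by (simp add: field_simps)
      moreover have "norm ((\<gamma> + of_nat m) * z / of_nat (Suc m)) = (norm (\<gamma> + of_nat m) / real (Suc m)) * norm z"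
        by (simp only: norm_mult norm_divide norm_of_nat) simp
      ultimately show ?thesis
        by (metis mult_right_mono norm_ge_zero)
    qed
    have "norm (MLterm \<gamma> \<nu> \<delta> z (Suc m)) = norm (MLterm \<gamma> \<nu> \<delta> z m) *
             (norm ((\<gamma> + of_nat m) * z / of_nat (Suc m)) * (norm (Beta w \<nu>) / norm (Gamma \<nu>)))"
      by (simp add: MLterm_Suc[OF assms] w_def norm_mult norm_divide)
    also have "\<dots> \<le> norm (MLterm \<gamma> \<nu> \<delta> z m) * (((norm \<gamma> + 1) * norm z) * (Beta (Re w) (Re \<nu>) / norm (Gamma \<nu>)))"
      by (intro mult_left_mono mult_mono q divide_right_mono nB) auto
    also have "\<dots> = norm (MLterm \<gamma> \<nu> \<delta> z m) * (K * Beta (Re w) (Re \<nu>))"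
      by (simp add: K_def)
    also have "K * Beta (Re w) (Re \<nu>) \<le> 1/2"
    proof -
      have "K * Beta (Re w) (Re \<nu>) \<le> K * (1 / (2 * (K + 1)))"
        using B K0 by (intro mult_left_mono) auto
      also have "\<dots> \<le> 1/2" using K0 by (simp add: field_simps)
      finally show ?thesis .
    qed
    then have "norm (MLterm \<gamma> \<nu> \<delta> z m) * (K * Beta (Re w) (Re \<nu>)) \<le> 1/2 * norm (MLterm \<gamma> \<nu> \<delta> z m)"
      by (metis mult_left_mono norm_ge_zero mult.commute)
    finally show "norm (norm (MLterm \<gamma> \<nu> \<delta> z (Suc m))) \<le> 1/2 * norm (norm (MLterm \<gamma> \<nu> \<delta> z m))"
      by simp
  qed simp
qed

lemma has_integral_infsum:
  fixes g :: "'i \<Rightarrow> real \<Rightarrow> complex" and h :: "real \<Rightarrow> real" and S :: "real set"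
  assumes A: "countable A" "infinite A"
    and gi: "\<And>i. i \<in> A \<Longrightarrow> g i absolutely_integrable_on S"
    and h: "h integrable_on S"
    and bnd: "\<And>x F. x \<in> S \<Longrightarrow> finite F \<Longrightarrow> F \<subseteq> A \<Longrightarrow> (\<Sum>i\<in>F. norm (g i x)) \<le> h x"
  shows "((\<lambda>x. infsum (\<lambda>i. g i x) A) has_integral infsum (\<lambda>i. integral S (g i)) A) S"
    and "(\<lambda>i. norm (integral S (g i))) summable_on A"
proof -
  define e where "e = from_nat_into A"
  have e: "bij_betw e UNIV A" unfolding e_def by (rule bij_betw_from_nat_into[OF A])
  have einj: "inj e" and eA: "\<And>n. e n \<in> A" using e by (auto simp: bij_betw_def)
  define s where "s x = infsum (\<lambda>i. g i x) A" for x
  define G where "G i = integral S (g i)" for i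
  have gint: "i \<in> A \<Longrightarrow> g i integrable_on S" for i
    using gi by (simp add: absolutely_integrable_on_def)
  have gnint: "i \<in> A \<Longrightarrow> (\<lambda>x. norm (g i x)) integrable_on S" for i
    using gi by (simp add: absolutely_integrable_on_def)
  have hs: "((\<lambda>i. g i x) has_sum s x) A" if x: "x \<in> S" for x
  proof -
    have "(\<lambda>i. norm (g i x)) summable_on A"
      unfolding abs_summable_iff_bdd_above using bnd[OF x] by (intro bdd_aboveI2[where M = "h x"]) auto
    then have "(\<lambda>i. g i x) summable_on A" by (rule abs_summable_summable)
    then show ?thesis unfolding s_def by (rule has_sum_infsum)
  qed
  define f where "f N x = (\<Sum>n<N. g (e n) x)" for N x
  have fconv: "(\<lambda>N. f N x) \<longlonglongrightarrow> s x" if "x \<in> S" for x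
  proof -
    have "((\<lambda>n. g (e n) x) has_sum s x) UNIV"
      using has_sum_reindex_bij_betw[OF e, of "\<lambda>i. g i x"] hs[OF that] by simp
    then have "(\<lambda>n. g (e n) x) sums s x" by (rule has_sum_imp_sums)
    then show ?thesis by (simp add: sums_def f_def)
  qed
  have fint: "f N integrable_on S" for N
    unfolding f_def using gint eA by (intro integrable_sum) auto
  have fbnd: "norm (f N x) \<le> h x" if "x \<in> S" for N x
  proof -
    have "norm (f N x) \<le> (\<Sum>n<N. norm (g (e n) x))" unfolding f_def by (rule norm_sum)
    also have "\<dots> = (\<Sum>i\<in>e ` {..<N}. norm (g i x))"
      using einj by (subst sum.reindex) (auto intro: inj_on_subset)
    also have "\<dots> \<le> h x" using eA by (intro bnd[OF that]) auto
    finally show ?thesis .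
  qed
  note dc = dominated_convergence[OF fint h fbnd fconv]
  have intf: "integral S (f N) = (\<Sum>n<N. G (e n))" for N
    unfolding f_def G_def using gint eA by (subst integral_sum) auto
  have sums1: "(\<lambda>n. G (e n)) sums integral S s"
    using dc(2) by (simp add: intf sums_def)
  show absG: "(\<lambda>i. norm (integral S (g i))) summable_on A"
    unfolding abs_summable_iff_bdd_above
  proof (intro bdd_aboveI2[where M = "integral S h"], safe)
    fix F assume F: "F \<subseteq> A" "finite F"
    have "(\<Sum>i\<in>F. norm (integral S (g i))) \<le> (\<Sum>i\<in>F. integral S (\<lambda>x. norm (g i x)))"
      using F gint gnint by (intro sum_mono integral_norm_bound_integral) auto
    also have "\<dots> = integral S (\<lambda>x. \<Sum>i\<in>F. norm (g i x))"
      using F gnint by (subst integral_sum) auto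
    also have "\<dots> \<le> integral S h"
      using F gnint h bnd by (intro integral_le integrable_sum) auto
    finally show "(\<Sum>i\<in>F. norm (integral S (g i))) \<le> integral S h" .
  qed
  then have "G summable_on A" unfolding G_def[abs_def] by (rule abs_summable_summable)
  then have "(G has_sum infsum G A) A" by (rule has_sum_infsum)
  then have "((\<lambda>n. G (e n)) has_sum infsum G A) UNIV"
    using has_sum_reindex_bij_betw[OF e, of G] by simp
  then have "(\<lambda>n. G (e n)) sums infsum G A" by (rule has_sum_imp_sums)
  with sums1 have eq: "integral S s = infsum G A" by (rule sums_unique2)
  show "((\<lambda>x. infsum (\<lambda>i. g i x) A) has_integral infsum (\<lambda>i. integral S (g i)) A) S"
    using dc(1) eq unfolding s_def[abs_def] G_def[abs_def] by (simp add: has_integral_integral)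
qed

lemma summable_on_norm_bound:
  fixes f :: "'a \<Rightarrow> complex" and u :: "'a \<Rightarrow> real"
  assumes u: "u summable_on A" and le: "\<And>x. x \<in> A \<Longrightarrow> norm (f x) \<le> u x"
  shows "f summable_on A" and "(\<lambda>x. norm (f x)) summable_on A"
proof -
  show n: "(\<lambda>x. norm (f x)) summable_on A"
  proof (rule nonneg_bdd_above_summable_on)
    show "bdd_above (sum (\<lambda>x. norm (f x)) ` {F. F \<subseteq> A \<and> finite F})"
    proof (rule bdd_aboveI2[where M = "infsum u A"], safe)
      fix F assume F: "F \<subseteq> A" "finite F"
      have "(\<Sum>x\<in>F. norm (f x)) \<le> (\<Sum>x\<in>F. u x)" using F le by (intro sum_mono) auto
      also have "\<dots> \<le> infsum u A"
        using F u le by (intro finite_sum_le_infsum) (auto intro: order_trans[OF norm_ge_zero])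
      finally show "(\<Sum>x\<in>F. norm (f x)) \<le> infsum u A" .
    qed
  qed auto
  then show "f summable_on A" by (rule abs_summable_summable)
qed

lemma conv_series:
  fixes c :: "'i \<Rightarrow> complex" and n :: "'i \<Rightarrow> nat" and d :: "nat \<Rightarrow> complex"
    and A B \<nu> :: complex and t :: real
  assumes I: "countable I" "I \<noteq> {}"
    and pos: "Re A > 0" "Re B > 0" "Re \<nu> > 0" "t > 0"
    and sc: "(\<lambda>i. norm (c i) * t powr (Re \<nu> * real (n i))) summable_on I"
    and sd: "(\<lambda>m. norm (d m) * t powr (Re \<nu> * real m)) summable_on UNIV"
  defines "F \<equiv> \<lambda>s. infsum (\<lambda>i. c i * complex_of_real s powr (\<nu> * of_nat (n i) + A - 1)) I"
    and "G \<equiv> \<lambda>s. infsum (\<lambda>m. d m * complex_of_real s powr (\<nu> * of_nat m + B - 1)) UNIV"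
  shows "((\<lambda>x. F (t - x) * G x) has_integral
           infsum (\<lambda>(i,m). c i * d m * Beta (\<nu> * of_nat (n i) + A) (\<nu> * of_nat m + B)
                    * complex_of_real t powr (\<nu> * of_nat (n i + m) + (A + B) - 1)) (I \<times> UNIV)) {0..t}"
    and "(\<lambda>(i,m). norm (c i * d m * Beta (\<nu> * of_nat (n i) + A) (\<nu> * of_nat m + B))
                    * t powr (Re \<nu> * real (n i + m))) summable_on (I \<times> UNIV)"
proof -
  define u where "u i = norm (c i) * t powr (Re \<nu> * real (n i))" for i
  define v where "v m = norm (d m) * t powr (Re \<nu> * real m)" for m
  define Sc where "Sc = infsum u I"
  define Sd where "Sd = infsum v UNIV"
  have u0: "u i \<ge> 0" for i by (simp add: u_def)
  have v0: "v m \<ge> 0" for m by (simp add: v_def)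
  have Sc0: "Sc \<ge> 0" unfolding Sc_def by (intro infsum_nonneg u0)
  have Sd0: "Sd \<ge> 0" unfolding Sd_def by (intro infsum_nonneg v0)
  define w where "w x = (t - x) powr (Re A - 1) * x powr (Re B - 1)" for x
  define h where "h x = Sc * Sd * w x" for x
  define a where "a i = \<nu> * of_nat (n i) + A" for i
  define b where "b m = \<nu> * of_nat m + B" for m
  have Ra: "Re (a i) > 0" for i using pos by (simp add: a_def add_nonneg_pos)
  have Rb: "Re (b m) > 0" for m using pos by (simp add: b_def add_nonneg_pos)
  define g1 where "g1 i s = c i * complex_of_real s powr (a i - 1)" for i s
  define g2 where "g2 m s = d m * complex_of_real s powr (b m - 1)" for m s
  define g where "g p x = g1 (fst p) (t - x) * g2 (snd p) x" for p x
  have b1: "norm (g1 i s) \<le> u i * s powr (Re A - 1)" if "0 \<le> s" "s \<le> t" for i s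
  proof -
    have "norm (g1 i s) = norm (c i) * (s powr (Re \<nu> * real (n i)) * s powr (Re A - 1))"
      using that by (simp add: g1_def norm_mult norm_ofreal_powr a_def powr_add [symmetric] algebra_simps)
    also have "\<dots> \<le> norm (c i) * (t powr (Re \<nu> * real (n i)) * s powr (Re A - 1))"
      using that pos by (intro mult_left_mono mult_right_mono powr_mono2) auto
    finally show ?thesis by (simp add: u_def mult_ac)
  qed
  have b2: "norm (g2 m s) \<le> v m * s powr (Re B - 1)" if "0 \<le> s" "s \<le> t" for m s
  proof -
    have "norm (g2 m s) = norm (d m) * (s powr (Re \<nu> * real m) * s powr (Re B - 1))"
      using that by (simp add: g2_def norm_mult norm_ofreal_powr b_def powr_add [symmetric] algebra_simps)
    also have "\<dots> \<le> norm (d m) * (t powr (Re \<nu> * real m) * s powr (Re B - 1))"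
      using that pos by (intro mult_left_mono mult_right_mono powr_mono2) auto
    finally show ?thesis by (simp add: v_def mult_ac)
  qed
  have bg: "norm (g p x) \<le> u (fst p) * v (snd p) * w x" if "x \<in> {0..t}" for p x
  proof -
    have "norm (g p x) = norm (g1 (fst p) (t - x)) * norm (g2 (snd p) x)" by (simp add: g_def norm_mult)
    also have "\<dots> \<le> (u (fst p) * (t - x) powr (Re A - 1)) * (v (snd p) * x powr (Re B - 1))"
      using that by (intro mult_mono b1 b2) (auto intro!: mult_nonneg_nonneg u0 v0)
    finally show ?thesis by (simp add: w_def mult_ac)
  qed
  have bnd: "(\<Sum>p\<in>P. norm (g p x)) \<le> h x" if x: "x \<in> {0..t}" and P: "finite P" "P \<subseteq> I \<times> UNIV" for x P
  proof -
    have w0: "w x \<ge> 0" by (simp add: w_def)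
    have "(\<Sum>p\<in>P. norm (g p x)) \<le> (\<Sum>p\<in>P. u (fst p) * v (snd p) * w x)"
      using x by (intro sum_mono bg)
    also have "\<dots> \<le> (\<Sum>p\<in>fst ` P \<times> snd ` P. u (fst p) * v (snd p) * w x)"
    proof (rule sum_mono2)
      show "P \<subseteq> fst ` P \<times> snd ` P" by force
    qed (use P w0 in \<open>auto intro!: mult_nonneg_nonneg u0 v0\<close>)
    also have "\<dots> = (\<Sum>i\<in>fst ` P. \<Sum>m\<in>snd ` P. u i * v m * w x)"
      by (subst sum.cartesian_product) (simp add: case_prod_beta)
    also have "\<dots> = (\<Sum>i\<in>fst ` P. \<Sum>m\<in>snd ` P. u i * v m) * w x"
      by (simp add: sum_distrib_right)
    also have "\<dots> = (\<Sum>i\<in>fst ` P. u i) * (\<Sum>m\<in>snd ` P. v m) * w x"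
      by (simp add: sum_product)
    also have "\<dots> \<le> Sc * Sd * w x"
    proof (intro mult_right_mono mult_mono w0)
      show "(\<Sum>i\<in>fst ` P. u i) \<le> Sc" unfolding Sc_def
        using P sc by (intro finite_sum_le_infsum) (auto simp: u_def[abs_def] u0)
      show "(\<Sum>m\<in>snd ` P. v m) \<le> Sd" unfolding Sd_def
        using P sd by (intro finite_sum_le_infsum) (auto simp: v_def[abs_def] v0)
    qed (use Sc0 Sd0 v0 in \<open>auto intro: sum_nonneg\<close>)
    finally show ?thesis by (simp add: h_def)
  qed
  have hint: "h integrable_on {0..t}"
  proof -
    have "(w has_integral (t powr (Re A + Re B - 1) * Beta (Re A) (Re B))) {0..t}"
      unfolding w_def[abs_def] using real_beta_scaled[of "Re A" "Re B" t] pos by simp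
    from has_integral_mult_right[OF this, of "Sc * Sd"] show ?thesis
      unfolding h_def[abs_def] by (auto simp: integrable_on_def)
  qed
  have gint: "(g p has_integral (c (fst p) * d (snd p) * (complex_of_real t powr (a (fst p) + b (snd p) - 1)
                 * Beta (a (fst p)) (b (snd p))))) {0..t}" for p
  proof -
    have "g p = (\<lambda>x. (c (fst p) * d (snd p)) * (complex_of_real (t - x) powr (a (fst p) - 1)
                   * complex_of_real x powr (b (snd p) - 1)))"
      by (auto simp: g_def g1_def g2_def fun_eq_iff mult_ac)
    then show ?thesis
      using has_integral_mult_right[OF complex_beta_scaled[OF Ra Rb pos(4)], of "c (fst p) * d (snd p)"]
      by simp
  qed
  have gabs: "g p absolutely_integrable_on {0..t}" for p
  proof -
    have "g p = (\<lambda>x. (c (fst p) * d (snd p)) * (complex_of_real (t - x) powr (a (fst p) - 1)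
                   * complex_of_real x powr (b (snd p) - 1)))"
      by (auto simp: g_def g1_def g2_def fun_eq_iff mult_ac)
    then show ?thesis
      using set_integrable_mult_right[OF beta_absint[OF Ra Rb pos(4)], of "c (fst p) * d (snd p)"]
      by simp
  qed
  have Ic: "countable (I \<times> (UNIV :: nat set))" using I by (simp add: countable_SIGMA)
  have Ii: "infinite (I \<times> (UNIV :: nat set))" using I by (auto dest: finite_cartesian_productD2)
  note INT = has_integral_infsum[OF Ic Ii gabs hint bnd]
  have intg: "integral {0..t} (g p) = (case p of (i, m) \<Rightarrow> c i * d m * Beta (\<nu> * of_nat (n i) + A) (\<nu> * of_nat m + B)
                    * complex_of_real t powr (\<nu> * of_nat (n i + m) + (A + B) - 1))" for p
  proof (cases p)
    case (Pair i m)
    have e: "a i + b m - 1 = \<nu> * of_nat (n i + m) + (A + B) - 1"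
      by (simp add: a_def b_def algebra_simps)
    have "integral {0..t} (g p) = c i * d m * (complex_of_real t powr (a i + b m - 1) * Beta (a i) (b m))"
      using integral_unique[OF gint[of p]] Pair by simp
    also have "\<dots> = c i * d m * (complex_of_real t powr (\<nu> * of_nat (n i + m) + (A + B) - 1)
                    * Beta (\<nu> * of_nat (n i) + A) (\<nu> * of_nat m + B))"
      unfolding e by (simp add: a_def b_def)
    finally show ?thesis using Pair by (simp add: mult_ac)
  qed
  have pw: "F (t - x) * G x = infsum (\<lambda>p. g p x) (I \<times> UNIV)" if x: "x \<in> {0<..<t}" for x
  proof -
    have hF: "((\<lambda>i. g1 i (t - x)) has_sum F (t - x)) I"
    proof -
      have "(\<lambda>i. g1 i (t - x)) summable_on I"
        using x b1 by (intro summable_on_norm_bound(1)[OF summable_on_cmult_left[OF sc[folded u_def[abs_def]]], of _ "(t - x) powr (Re A - 1)"]) auto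
      then show ?thesis unfolding F_def g1_def a_def by (rule has_sum_infsum)
    qed
    have hG: "((\<lambda>m. g2 m x) has_sum G x) UNIV"
    proof -
      have "(\<lambda>m. g2 m x) summable_on UNIV"
        using x b2 by (intro summable_on_norm_bound(1)[OF summable_on_cmult_left[OF sd[folded v_def[abs_def]]], of _ "x powr (Re B - 1)"]) auto
      then show ?thesis unfolding G_def g2_def b_def by (rule has_sum_infsum)
    qed
    have sumP: "(\<lambda>p. g p x) summable_on (I \<times> UNIV)"
    proof (rule abs_summable_summable, rule nonneg_bdd_above_summable_on)
      show "bdd_above (sum (\<lambda>p. norm (g p x)) ` {F. F \<subseteq> I \<times> UNIV \<and> finite F})"
        using x by (intro bdd_aboveI2[where M = "h x"] bnd) auto
    qed auto
    have "((\<lambda>p. g p x) has_sum F (t - x) * G x) (Sigma I (\<lambda>_. UNIV))"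
    proof (rule has_sum_SigmaI[where g = "\<lambda>i. g1 i (t - x) * G x"])
      show "((\<lambda>m. g (i, m) x) has_sum g1 i (t - x) * G x) UNIV" if "i \<in> I" for i
        unfolding g_def using has_sum_cmult_right[OF hG, of "g1 i (t - x)"] by simp
      show "((\<lambda>i. g1 i (t - x) * G x) has_sum F (t - x) * G x) I"
        by (rule has_sum_cmult_left[OF hF])
      show "(\<lambda>p. g p x) summable_on Sigma I (\<lambda>_. UNIV)" using sumP by simp
    qed
    then show ?thesis by (simp add: infsumI)
  qed
  have "((\<lambda>x. infsum (\<lambda>p. g p x) (I \<times> UNIV)) has_integral infsum (\<lambda>p. integral {0..t} (g p)) (I \<times> UNIV)) {0<..<t}"
    using INT(1) by (simp add: has_integral_Icc_iff_Ioo)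
  then have "((\<lambda>x. F (t - x) * G x) has_integral infsum (\<lambda>p. integral {0..t} (g p)) (I \<times> UNIV)) {0<..<t}"
    by (rule has_integral_spike_eq[OF negligible_empty, THEN iffD1, rotated]) (simp add: pw)
  then show "((\<lambda>x. F (t - x) * G x) has_integral
           infsum (\<lambda>(i,m). c i * d m * Beta (\<nu> * of_nat (n i) + A) (\<nu> * of_nat m + B)
                    * complex_of_real t powr (\<nu> * of_nat (n i + m) + (A + B) - 1)) (I \<times> UNIV)) {0..t}"
    by (simp add: intg has_integral_Icc_iff_Ioo)
  have pt: "norm (integral {0..t} (g (i, m))) * t powr (1 - Re (A + B)) =
      norm (c i * d m * Beta (\<nu> * of_nat (n i) + A) (\<nu> * of_nat m + B)) * t powr (Re \<nu> * real (n i + m))" for i m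
  proof -
    have "norm (integral {0..t} (g (i, m))) * t powr (1 - Re (A + B)) =
        norm (c i * d m * Beta (\<nu> * of_nat (n i) + A) (\<nu> * of_nat m + B)) *
        (t powr (Re (\<nu> * of_nat (n i + m) + (A + B) - 1)) * t powr (1 - Re (A + B)))"
      using pos by (simp only: intg prod.case norm_mult norm_ofreal_powr)
    also have "t powr (Re (\<nu> * of_nat (n i + m) + (A + B) - 1)) * t powr (1 - Re (A + B)) =
        t powr (Re (\<nu> * of_nat (n i + m) + (A + B) - 1) + (1 - Re (A + B)))"
      by (rule powr_add[symmetric])
    also have "Re (\<nu> * of_nat (n i + m) + (A + B) - 1) + (1 - Re (A + B)) = Re \<nu> * real (n i + m)"
      by simp
    finally show ?thesis .
  qed
  have "(\<lambda>p. norm (integral {0..t} (g p)) * t powr (1 - Re (A + B))) summable_on (I \<times> UNIV)"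
    by (rule summable_on_cmult_left[OF INT(2)])
  also have "(\<lambda>p. norm (integral {0..t} (g p)) * t powr (1 - Re (A + B))) =
      (\<lambda>(i,m). norm (c i * d m * Beta (\<nu> * of_nat (n i) + A) (\<nu> * of_nat m + B))
                    * t powr (Re \<nu> * real (n i + m)))"
    by (rule ext, rename_tac p, case_tac p, simp only: pt prod.case)
  finally show "(\<lambda>(i,m). norm (c i * d m * Beta (\<nu> * of_nat (n i) + A) (\<nu> * of_nat m + B))
                    * t powr (Re \<nu> * real (n i + m))) summable_on (I \<times> UNIV)" .
qed

lemma cpowr_pow:
  assumes "s > 0"
  shows "(complex_of_real s powr \<nu>) ^ m = complex_of_real s powr (\<nu> * of_nat m)"
proof -
  have "(complex_of_real s powr \<nu>) ^ m = exp (\<nu> * ln (complex_of_real s)) ^ m"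
    using assms by (simp add: powr_def)
  also have "\<dots> = exp (of_nat m * (\<nu> * ln (complex_of_real s)))" by (simp add: exp_of_nat_mult)
  also have "\<dots> = complex_of_real s powr (\<nu> * of_nat m)" using assms by (simp add: powr_def mult_ac)
  finally show ?thesis .
qed

lemma series_ML3:
  fixes \<gamma> \<nu> \<delta> \<eta> :: complex and s :: real
  assumes "Re \<gamma> > 0" "Re \<nu> > 0" "Re \<delta> > 0" "s > 0"
  shows "((\<lambda>m. (Gamma (\<gamma> + of_nat m) / (Gamma \<gamma> * fact m) * \<eta> ^ m / Gamma (\<nu> * of_nat m + \<delta>))
            * complex_of_real s powr (\<nu> * of_nat m + \<delta> - 1))
          has_sum (complex_of_real s powr (\<delta> - 1) * ML3 \<gamma> \<nu> \<delta> (\<eta> * complex_of_real s powr \<nu>))) UNIV"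
    and "(\<lambda>m. norm (Gamma (\<gamma> + of_nat m) / (Gamma \<gamma> * fact m) * \<eta> ^ m / Gamma (\<nu> * of_nat m + \<delta>))
            * s powr (Re \<nu> * real m)) summable_on UNIV"
proof -
  define z where "z = \<eta> * complex_of_real s powr \<nu>"
  have ns: "summable (\<lambda>m. norm (MLterm \<gamma> \<nu> \<delta> z m))"
    using MLterm_abs_summable assms by blast
  then have "summable (MLterm \<gamma> \<nu> \<delta> z)" by (rule summable_norm_cancel)
  then have "MLterm \<gamma> \<nu> \<delta> z sums ML3 \<gamma> \<nu> \<delta> z"
    unfolding ML3_def MLterm_def[abs_def] by (simp add: summable_sums)
  from norm_summable_imp_has_sum[OF ns this]
  have "(MLterm \<gamma> \<nu> \<delta> z has_sum ML3 \<gamma> \<nu> \<delta> z) UNIV" .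
  from has_sum_cmult_right[OF this, of "complex_of_real s powr (\<delta> - 1)"]
  have h: "((\<lambda>m. complex_of_real s powr (\<delta> - 1) * MLterm \<gamma> \<nu> \<delta> z m) has_sum
          complex_of_real s powr (\<delta> - 1) * ML3 \<gamma> \<nu> \<delta> z) UNIV" .
  have e: "complex_of_real s powr (\<delta> - 1) * MLterm \<gamma> \<nu> \<delta> z m =
       (Gamma (\<gamma> + of_nat m) / (Gamma \<gamma> * fact m) * \<eta> ^ m / Gamma (\<nu> * of_nat m + \<delta>))
            * complex_of_real s powr (\<nu> * of_nat m + \<delta> - 1)" for m
  proof -
    have "complex_of_real s powr (\<nu> * of_nat m + \<delta> - 1) = complex_of_real s powr (\<nu> * of_nat m) * complex_of_real s powr (\<delta> - 1)"
      by (simp add: powr_add [symmetric] add_diff_eq)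
    then show ?thesis
      unfolding MLterm_def z_def power_mult_distrib cpowr_pow[OF assms(4)] by (simp add: mult_ac)
  qed
  show "((\<lambda>m. (Gamma (\<gamma> + of_nat m) / (Gamma \<gamma> * fact m) * \<eta> ^ m / Gamma (\<nu> * of_nat m + \<delta>))
            * complex_of_real s powr (\<nu> * of_nat m + \<delta> - 1))
          has_sum (complex_of_real s powr (\<delta> - 1) * ML3 \<gamma> \<nu> \<delta> (\<eta> * complex_of_real s powr \<nu>))) UNIV"
    using h[unfolded e] by (simp add: z_def)
  have "(\<lambda>m. norm (MLterm \<gamma> \<nu> \<delta> z m)) summable_on UNIV"
    using ns by (simp add: summable_on_UNIV_nonneg_real_iff)
  moreover have "norm (MLterm \<gamma> \<nu> \<delta> z m) = norm (Gamma (\<gamma> + of_nat m) / (Gamma \<gamma> * fact m) * \<eta> ^ m / Gamma (\<nu> * of_nat m + \<delta>))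
            * s powr (Re \<nu> * real m)" for m
  proof -
    have "norm (complex_of_real s powr (\<nu> * of_nat m)) = s powr (Re \<nu> * real m)"
      using assms by (simp add: norm_ofreal_powr)
    then show ?thesis
      unfolding MLterm_def z_def power_mult_distrib cpowr_pow[OF assms(4)]
      by (simp add: norm_mult norm_divide norm_power)
  qed
  ultimately show "(\<lambda>m. norm (Gamma (\<gamma> + of_nat m) / (Gamma \<gamma> * fact m) * \<eta> ^ m / Gamma (\<nu> * of_nat m + \<delta>))
            * s powr (Re \<nu> * real m)) summable_on UNIV" by simp
qed

definition Pc :: "(nat \<Rightarrow> complex) \<Rightarrow> (nat \<Rightarrow> complex) \<Rightarrow> nat \<Rightarrow> nat \<Rightarrow> complex" where
  "Pc \<gamma> \<eta> j m = Gamma (\<gamma> j + of_nat m) / (Gamma (\<gamma> j) * fact m) * \<eta> j ^ m"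

definition coefN :: "(nat \<Rightarrow> complex) \<Rightarrow> (nat \<Rightarrow> complex) \<Rightarrow> complex \<Rightarrow> (nat \<Rightarrow> complex) \<Rightarrow> nat \<Rightarrow> (nat \<Rightarrow> nat) \<Rightarrow> complex" where
  "coefN \<gamma> \<eta> \<nu> \<delta> N k = (\<Prod>j<N. Pc \<gamma> \<eta> j (k j)) / Gamma (\<nu> * of_nat (\<Sum>j<N. k j) + (\<Sum>j<N. \<delta> j))"

lemma sum_upd_last: "(\<Sum>j<Suc N. (k(N := m)) j) = (\<Sum>j<N. k j) + (m::nat)"
  by (simp add: sum.lessThan_Suc)

lemma prod_upd_last: "(\<Prod>j<Suc N. g j ((k(N := m)) j)) = (\<Prod>j<N. g j (k j)) * (g N m :: complex)"
  by (simp add: prod.lessThan_Suc)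

lemma Re_sum_delta_pos:
  fixes N :: nat and \<delta> :: "nat \<Rightarrow> complex"
  assumes "N \<ge> 1" "\<And>j. j < N \<Longrightarrow> Re (\<delta> j) > 0"
  shows "Re (\<Sum>j<N. \<delta> j) > 0"
proof -
  have "0 \<in> {..<N}" using assms(1) by simp
  then have "{..<N} \<noteq> {}" by blast
  then have "(\<Sum>j<N. Re (\<delta> j)) > 0" using assms by (intro sum_pos) auto
  then show ?thesis by (simp add: Re_sum)
qed

lemma coef_step:
  fixes \<nu> :: complex and N :: nat
  assumes "Re \<nu> > 0" "Re (\<Sum>j<N. \<delta> j) > 0" "Re (\<delta> N) > 0"
  shows "coefN \<gamma> \<eta> \<nu> \<delta> N k * (Pc \<gamma> \<eta> N m / Gamma (\<nu> * of_nat m + \<delta> N))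
           * Beta (\<nu> * of_nat (\<Sum>j<N. k j) + (\<Sum>j<N. \<delta> j)) (\<nu> * of_nat m + \<delta> N)
         = coefN \<gamma> \<eta> \<nu> \<delta> (Suc N) (k(N := m))"
proof -
  define a where "a = \<nu> * of_nat (\<Sum>j<N. k j) + (\<Sum>j<N. \<delta> j)"
  define b where "b = \<nu> * of_nat m + \<delta> N"
  have Ra: "Re a > 0" using assms
    by (simp add: a_def) (intro add_nonneg_pos mult_nonneg_nonneg sum_nonneg, auto simp: Re_sum)
  have Rb: "Re b > 0" using assms by (simp add: b_def add_nonneg_pos)
  have ga: "Gamma a \<noteq> 0" and gb: "Gamma b \<noteq> 0"
    using Ra Rb by (auto intro!: Gamma_nonzero Re_pos_not_nonpos_Int)
  have ab: "a + b = \<nu> * of_nat (\<Sum>j<Suc N. (k(N := m)) j) + (\<Sum>j<Suc N. \<delta> j)"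
    unfolding sum_upd_last by (simp add: a_def b_def algebra_simps)
  have r: "coefN \<gamma> \<eta> \<nu> \<delta> (Suc N) (k(N := m)) = (\<Prod>j<N. Pc \<gamma> \<eta> j (k j)) * Pc \<gamma> \<eta> N m / Gamma (a + b)"
    unfolding coefN_def ab prod_upd_last[of "Pc \<gamma> \<eta>"] ..
  have l: "coefN \<gamma> \<eta> \<nu> \<delta> N k * (Pc \<gamma> \<eta> N m / Gamma (\<nu> * of_nat m + \<delta> N))
           * Beta (\<nu> * of_nat (\<Sum>j<N. k j) + (\<Sum>j<N. \<delta> j)) (\<nu> * of_nat m + \<delta> N)
        = ((\<Prod>j<N. Pc \<gamma> \<eta> j (k j)) / Gamma a) * (Pc \<gamma> \<eta> N m / Gamma b) * (Gamma a * Gamma b / Gamma (a + b))"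
    unfolding coefN_def Beta_def a_def b_def ..
  show ?thesis unfolding l r using ga gb by (simp add: field_simps)
qed

lemma PiE_upd_in: fixes N :: nat shows "k \<in> {..<N} \<rightarrow>\<^sub>E (UNIV :: nat set) \<Longrightarrow> k(N := m) \<in> {..<Suc N} \<rightarrow>\<^sub>E (UNIV :: nat set)"
  by (auto simp: PiE_iff extensional_def)

lemma PiE_undef_in: fixes N :: nat shows "k \<in> {..<Suc N} \<rightarrow>\<^sub>E (UNIV :: nat set) \<Longrightarrow> k(N := undefined) \<in> {..<N} \<rightarrow>\<^sub>E (UNIV :: nat set)"
  by (auto simp: PiE_iff extensional_def)

lemma PiE_upd_undef:
  fixes N :: nat
  assumes "k \<in> {..<N} \<rightarrow>\<^sub>E (UNIV :: nat set)" shows "k(N := undefined) = k"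
proof -
  have "k N = undefined" using assms by (rule PiE_arb) simp
  then show ?thesis by auto
qed

lemma main_inv:
  fixes M :: nat and \<gamma> \<delta> \<eta> :: "nat \<Rightarrow> complex" and \<nu> :: complex
  assumes g: "\<And>j. j < M \<Longrightarrow> Re (\<gamma> j) > 0" and nu: "Re \<nu> > 0"
    and d: "\<And>j. j < M \<Longrightarrow> Re (\<delta> j) > 0"
  defines "f \<equiv> (\<lambda>j x. complex_of_real x powr (\<delta> j - 1) * ML3 (\<gamma> j) \<nu> (\<delta> j) (\<eta> j * complex_of_real x powr \<nu>))"
  shows "Suc n \<le> M \<Longrightarrow> s > 0 \<Longrightarrow>
     ((\<lambda>k. coefN \<gamma> \<eta> \<nu> \<delta> (Suc n) k * complex_of_real s powr (\<nu> * of_nat (\<Sum>j<Suc n. k j) + (\<Sum>j<Suc n. \<delta> j) - 1))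
        has_sum conv_iter f n s) ({..<Suc n} \<rightarrow>\<^sub>E (UNIV::nat set))
   \<and> (\<lambda>k. norm (coefN \<gamma> \<eta> \<nu> \<delta> (Suc n) k) * s powr (Re \<nu> * real (\<Sum>j<Suc n. k j)))
        summable_on ({..<Suc n} \<rightarrow>\<^sub>E (UNIV::nat set))"
proof (induction n arbitrary: s)
  case 0
  then have M: "0 < M" and s: "s > 0" by auto
  note MLs = series_ML3[OF g[OF M] nu d[OF M] s, of "\<eta> 0"]
  define T where "T = {..<Suc 0} \<rightarrow>\<^sub>E (UNIV::nat set)"
  define jj where "jj m = restrict (\<lambda>_. m) {..<Suc 0}" for m :: nat
  have w1: "jj m \<in> T" for m by (simp add: jj_def T_def)
  have w2: "jj (b 0) = b" if "b \<in> T" for b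
    using that by (auto simp: jj_def T_def PiE_iff extensional_def fun_eq_iff)
  have w3: "jj m 0 = m" for m by (simp add: jj_def)
  show ?case
  proof
    show "((\<lambda>k. coefN \<gamma> \<eta> \<nu> \<delta> (Suc 0) k * complex_of_real s powr (\<nu> * of_nat (\<Sum>j<Suc 0. k j) + (\<Sum>j<Suc 0. \<delta> j) - 1))
        has_sum conv_iter f 0 s) ({..<Suc 0} \<rightarrow>\<^sub>E (UNIV::nat set))"
      unfolding T_def[symmetric]
      using MLs(1)
      by (subst has_sum_reindex_bij_witness[of UNIV "\<lambda>k. k 0" jj, symmetric])
         (auto simp: w1 w2 w3 f_def coefN_def Pc_def)
    show "(\<lambda>k. norm (coefN \<gamma> \<eta> \<nu> \<delta> (Suc 0) k) * s powr (Re \<nu> * real (\<Sum>j<Suc 0. k j)))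
        summable_on ({..<Suc 0} \<rightarrow>\<^sub>E (UNIV::nat set))"
      unfolding T_def[symmetric]
      using MLs(2)
      by (subst summable_on_reindex_bij_witness[of UNIV "\<lambda>k. k 0" jj, symmetric])
         (auto simp: w1 w2 w3 coefN_def Pc_def)
  qed
next
  case (Suc n)
  define N where "N = Suc n"
  have NM: "N < M" and s: "s > 0" using Suc.prems by (auto simp: N_def)
  have IH: "((\<lambda>k. coefN \<gamma> \<eta> \<nu> \<delta> N k * complex_of_real s' powr (\<nu> * of_nat (\<Sum>j<N. k j) + (\<Sum>j<N. \<delta> j) - 1))
        has_sum conv_iter f n s') ({..<N} \<rightarrow>\<^sub>E (UNIV::nat set))
   \<and> (\<lambda>k. norm (coefN \<gamma> \<eta> \<nu> \<delta> N k) * s' powr (Re \<nu> * real (\<Sum>j<N. k j)))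
        summable_on ({..<N} \<rightarrow>\<^sub>E (UNIV::nat set))" if "s' > 0" for s'
    using Suc.IH[of s'] Suc.prems that by (simp add: N_def)
  define I where "I = {..<N} \<rightarrow>\<^sub>E (UNIV::nat set)"
  define T where "T = {..<Suc N} \<rightarrow>\<^sub>E (UNIV::nat set)"
  define A where "A = (\<Sum>j<N. \<delta> j)"
  define B where "B = \<delta> N"
  define nn where "nn k = (\<Sum>j<N. k j)" for k :: "nat \<Rightarrow> nat"
  define c where "c = coefN \<gamma> \<eta> \<nu> \<delta> N"
  define dd where "dd m = Gamma (\<gamma> N + of_nat m) / (Gamma (\<gamma> N) * fact m) * \<eta> N ^ m / Gamma (\<nu> * of_nat m + \<delta> N)" for m
  have Ic: "countable I" unfolding I_def by (intro countable_PiE) auto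
  have Ine: "I \<noteq> {}" unfolding I_def by (auto simp: PiE_eq_empty_iff)
  have RA: "Re A > 0" unfolding A_def using NM d by (intro Re_sum_delta_pos) (auto simp: N_def)
  have RB: "Re B > 0" unfolding B_def using NM d by auto
  note MLs = series_ML3[OF g[OF NM] nu d[OF NM]]
  have sc: "(\<lambda>i. norm (c i) * s powr (Re \<nu> * real (nn i))) summable_on I"
    using IH[OF s] by (simp add: c_def nn_def I_def)
  have sd: "(\<lambda>m. norm (dd m) * s powr (Re \<nu> * real m)) summable_on UNIV"
    using MLs(2)[OF s, of "\<eta> N"] by (simp add: dd_def)
  note CS = conv_series[OF Ic Ine RA RB nu s sc sd]
  have Feq: "infsum (\<lambda>i. c i * complex_of_real s' powr (\<nu> * of_nat (nn i) + A - 1)) I = conv_iter f n s'"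
    if "s' > 0" for s'
    using IH[OF that] by (simp add: infsumI c_def nn_def A_def I_def)
  have Geq: "infsum (\<lambda>m. dd m * complex_of_real x powr (\<nu> * of_nat m + B - 1)) UNIV = f N x"
    if "x > 0" for x
    using MLs(1)[OF that, of "\<eta> N"] by (simp add: infsumI dd_def B_def f_def)
  define V where "V = infsum (\<lambda>(i,m). c i * dd m * Beta (\<nu> * of_nat (nn i) + A) (\<nu> * of_nat m + B)
                    * complex_of_real s powr (\<nu> * of_nat (nn i + m) + (A + B) - 1)) (I \<times> UNIV)"
  have hi: "((\<lambda>x. conv_iter f n (s - x) * f N x) has_integral V) {0..s}"
  proof -
    have "((\<lambda>x. infsum (\<lambda>i. c i * complex_of_real (s - x) powr (\<nu> * of_nat (nn i) + A - 1)) I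
             * infsum (\<lambda>m. dd m * complex_of_real x powr (\<nu> * of_nat m + B - 1)) UNIV) has_integral V) {0..s}"
      using CS(1) by (simp add: V_def)
    moreover have neg: "negligible {0, s}" by (rule negligible_finite) simp
    ultimately show ?thesis
      by (intro has_integral_spike[OF neg _ \<open>(_ has_integral V) {0..s}\<close>]) (auto simp: Feq Geq simp del: of_real_diff)
  qed
  have cv: "conv_iter f (Suc n) s = V"
    using integral_unique[OF hi] by (simp add: conv_def N_def)
  define Tm where "Tm = (\<lambda>(i,m). c i * dd m * Beta (\<nu> * of_nat (nn i) + A) (\<nu> * of_nat m + B)
                    * complex_of_real s powr (\<nu> * of_nat (nn i + m) + (A + B) - 1))"
  define U where "U = (\<lambda>(i,m). norm (c i * dd m * Beta (\<nu> * of_nat (nn i) + A) (\<nu> * of_nat m + B))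
                    * s powr (Re \<nu> * real (nn i + m)))"
  have sU: "U summable_on (I \<times> UNIV)" using CS(2) by (simp add: U_def)
  have nT: "norm (Tm p) \<le> U p * s powr (Re (A + B) - 1)" for p
  proof (cases p)
    case (Pair i m)
    have "norm (complex_of_real s powr (\<nu> * of_nat (nn i + m) + (A + B) - 1))
        = s powr (Re \<nu> * real (nn i + m) + (Re (A + B) - 1))"
      using s by (simp add: norm_ofreal_powr algebra_simps)
    also have "\<dots> = s powr (Re \<nu> * real (nn i + m)) * s powr (Re (A + B) - 1)" by (rule powr_add)
    finally show ?thesis using Pair by (simp add: Tm_def U_def norm_mult mult_ac)
  qed
  have sT: "Tm summable_on (I \<times> UNIV)"
    by (rule summable_on_norm_bound(1)[OF summable_on_cmult_left[OF sU] nT])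
  have hsT: "(Tm has_sum V) (I \<times> UNIV)"
    using sT unfolding V_def Tm_def[symmetric] by (rule has_sum_infsum)
  define ii where "ii k' = (k'(N := undefined), k' N)" for k' :: "nat \<Rightarrow> nat"
  define jj where "jj = (\<lambda>(k :: nat \<Rightarrow> nat, m :: nat). k(N := m))"
  have w1: "ii (jj a) = a" if "a \<in> I \<times> UNIV" for a
    using that by (cases a) (simp add: ii_def jj_def I_def PiE_upd_undef)
  have w2: "jj a \<in> T" if "a \<in> I \<times> UNIV" for a
    using that by (cases a) (simp add: jj_def I_def T_def PiE_upd_in)
  have w3: "jj (ii b) = b" for b by (simp add: ii_def jj_def)
  have w4: "ii b \<in> I \<times> UNIV" if "b \<in> T" for b
    using that by (simp add: ii_def I_def T_def PiE_undef_in)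
  have RA': "Re (\<Sum>j<N. \<delta> j) > 0" using RA by (simp add: A_def)
  have ce: "coefN \<gamma> \<eta> \<nu> \<delta> (Suc N) (k(N := m)) = c k * dd m * Beta (\<nu> * of_nat (nn k) + A) (\<nu> * of_nat m + B)"
    for k m
    using coef_step[OF nu RA' RB[unfolded B_def], of \<gamma> \<eta> k m]
    by (simp add: c_def dd_def Pc_def nn_def A_def B_def)
  have sdel: "(\<Sum>j<Suc N. \<delta> j) = A + B" by (simp add: A_def B_def)
  have sk: "(\<Sum>j<Suc N. (k(N := m)) j) = nn k + m" for k m by (simp add: sum_upd_last nn_def)
  define h where "h k = coefN \<gamma> \<eta> \<nu> \<delta> (Suc N) k * complex_of_real s powr (\<nu> * of_nat (\<Sum>j<Suc N. k j) + (\<Sum>j<Suc N. \<delta> j) - 1)" for k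
  define h' where "h' k = norm (coefN \<gamma> \<eta> \<nu> \<delta> (Suc N) k) * s powr (Re \<nu> * real (\<Sum>j<Suc N. k j))" for k
  have hj: "h (jj a) = Tm a" if "a \<in> I \<times> UNIV" for a
    by (cases a) (simp only: h_def jj_def prod.case ce sk sdel Tm_def)
  have hj': "h' (jj a) = U a" if "a \<in> I \<times> UNIV" for a
    by (cases a) (simp only: h'_def jj_def prod.case ce sk U_def)
  have P1: "(h has_sum V) T"
    using has_sum_reindex_bij_witness[of "I \<times> UNIV" ii jj T h Tm V V, OF w1 w2 w3 w4 hj refl] hsT by simp
  have P2: "h' summable_on T"
    using summable_on_reindex_bij_witness[of "I \<times> UNIV" ii jj T h' U, OF w1 w2 w3 w4 hj'] sU by simp
  show ?case using P1 P2 cv unfolding T_def N_def h_def h'_def by simp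
qed

lemma term_eq:
  fixes t :: real and k :: "nat \<Rightarrow> nat"
  assumes t: "t > 0"
  shows "complex_of_real t powr ((\<Sum>j<M. \<delta> j) - 1) *
      ((\<Prod>j<M. Gamma (\<gamma> j + of_nat (k j)) / (Gamma (\<gamma> j) * fact (k j)) * (\<eta> j * complex_of_real t powr \<nu>) ^ k j)
        / Gamma (\<nu> * of_nat (\<Sum>j<M. k j) + (\<Sum>j<M. \<delta> j)))
    = coefN \<gamma> \<eta> \<nu> \<delta> M k * complex_of_real t powr (\<nu> * of_nat (\<Sum>j<M. k j) + (\<Sum>j<M. \<delta> j) - 1)"
proof -
  have "(\<Prod>j<M. Gamma (\<gamma> j + of_nat (k j)) / (Gamma (\<gamma> j) * fact (k j)) * (\<eta> j * complex_of_real t powr \<nu>) ^ k j)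
      = (\<Prod>j<M. Pc \<gamma> \<eta> j (k j) * (complex_of_real t powr \<nu>) ^ k j)"
    by (intro prod.cong refl) (simp add: Pc_def power_mult_distrib mult_ac)
  also have "\<dots> = (\<Prod>j<M. Pc \<gamma> \<eta> j (k j)) * (complex_of_real t powr \<nu>) ^ (\<Sum>j<M. k j)"
    by (simp add: prod.distrib power_sum)
  also have "(complex_of_real t powr \<nu>) ^ (\<Sum>j<M. k j) = complex_of_real t powr (\<nu> * of_nat (\<Sum>j<M. k j))"
    by (rule cpowr_pow[OF t])
  finally have p: "(\<Prod>j<M. Gamma (\<gamma> j + of_nat (k j)) / (Gamma (\<gamma> j) * fact (k j)) * (\<eta> j * complex_of_real t powr \<nu>) ^ k j)
      = (\<Prod>j<M. Pc \<gamma> \<eta> j (k j)) * complex_of_real t powr (\<nu> * of_nat (\<Sum>j<M. k j))" .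
  have e: "complex_of_real t powr (\<nu> * of_nat (\<Sum>j<M. k j) + (\<Sum>j<M. \<delta> j) - 1)
      = complex_of_real t powr ((\<Sum>j<M. \<delta> j) - 1) * complex_of_real t powr (\<nu> * of_nat (\<Sum>j<M. k j))"
    by (simp add: powr_add [symmetric] algebra_simps)
  show ?thesis unfolding p e coefN_def by (simp add: field_simps)
qed

theorem lemma2p1:
  fixes M :: nat and t :: real and \<gamma> \<delta> \<eta> :: "nat \<Rightarrow> complex" and \<nu> :: complex
  assumes "M \<ge> 1" and "t \<ge> 0"
    and "\<And>j. j < M \<Longrightarrow> Re (\<gamma> j) > 0"
    and "\<nu> \<noteq> 0" and "Re \<nu> > 0"
    and "\<And>j. j < M \<Longrightarrow> \<delta> j \<noteq> 0 \<and> Re (\<delta> j) > 0"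
    and "inj_on \<eta> {..<M}"
  shows "conv_iter (\<lambda>j x. complex_of_real x powr (\<delta> j - 1) * ML3 (\<gamma> j) \<nu> (\<delta> j) (\<eta> j * complex_of_real x powr \<nu>)) (M - 1) t
       = complex_of_real t powr ((\<Sum>j<M. \<delta> j) - 1)
         * MML M \<gamma> \<nu> (\<Sum>j<M. \<delta> j) (\<lambda>j. \<eta> j * complex_of_real t powr \<nu>)"
proof -
  define f where "f = (\<lambda>j x. complex_of_real x powr (\<delta> j - 1) * ML3 (\<gamma> j) \<nu> (\<delta> j) (\<eta> j * complex_of_real x powr \<nu>))"
  have g: "\<And>j. j < M \<Longrightarrow> Re (\<gamma> j) > 0" by (rule assms(3))
  have d: "\<And>j. j < M \<Longrightarrow> Re (\<delta> j) > 0" using assms(6) by blast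
  obtain n where Mn: "M = Suc n" using assms(1) by (cases M) auto
  show ?thesis
  proof (cases "t = 0")
    case True
    have "conv_iter f n 0 = 0"
    proof (cases n)
      case 0
      then show ?thesis by (simp add: f_def)
    next
      case (Suc k)
      then show ?thesis by (simp add: conv_def)
    qed
    then show ?thesis using True Mn by (simp add: f_def)
  next
    case False
    with assms(2) have t: "t > 0" by simp
    have "((\<lambda>k. coefN \<gamma> \<eta> \<nu> \<delta> (Suc n) k * complex_of_real t powr (\<nu> * of_nat (\<Sum>j<Suc n. k j) + (\<Sum>j<Suc n. \<delta> j) - 1))
        has_sum conv_iter f n t) ({..<Suc n} \<rightarrow>\<^sub>E (UNIV::nat set))"
      using main_inv[where M=M and \<gamma>=\<gamma> and \<delta>=\<delta> and \<nu>=\<nu> and n=n and s=t and \<eta>=\<eta>, OF g assms(5) d] Mn t by (simp add: f_def)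
    then have lhs: "conv_iter f n t = infsum (\<lambda>k. coefN \<gamma> \<eta> \<nu> \<delta> M k * complex_of_real t powr (\<nu> * of_nat (\<Sum>j<M. k j) + (\<Sum>j<M. \<delta> j) - 1)) ({..<M} \<rightarrow>\<^sub>E (UNIV::nat set))"
      using Mn by (simp add: infsumI)
    have "complex_of_real t powr ((\<Sum>j<M. \<delta> j) - 1) * MML M \<gamma> \<nu> (\<Sum>j<M. \<delta> j) (\<lambda>j. \<eta> j * complex_of_real t powr \<nu>)
        = infsum (\<lambda>k. complex_of_real t powr ((\<Sum>j<M. \<delta> j) - 1) *
            ((\<Prod>j<M. Gamma (\<gamma> j + of_nat (k j)) / (Gamma (\<gamma> j) * fact (k j)) * (\<eta> j * complex_of_real t powr \<nu>) ^ k j)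
              / Gamma (\<nu> * of_nat (\<Sum>j<M. k j) + (\<Sum>j<M. \<delta> j)))) ({..<M} \<rightarrow>\<^sub>E (UNIV::nat set))"
      unfolding MML_def by (rule infsum_cmult_right'[symmetric])
    also have "\<dots> = infsum (\<lambda>k. coefN \<gamma> \<eta> \<nu> \<delta> M k * complex_of_real t powr (\<nu> * of_nat (\<Sum>j<M. k j) + (\<Sum>j<M. \<delta> j) - 1)) ({..<M} \<rightarrow>\<^sub>E (UNIV::nat set))"
      by (intro infsum_cong term_eq t)
    finally show ?thesis using lhs Mn by (simp add: f_def)
  qed
qed

end
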